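(* Let $d_R\ge2$. (a) If the glue code is compatible with the memory via $S,T$ and finely devised for $\Sigma$, and $\gamma$ satisfies $J_{X,C}S^{\mathrm T}=\gamma H_G$, then $H^{M\text{-}M}_X(J^{M\text{-}M}_Z)^{\mathrm T}=0$, $H^{M\text{-}M}_Z(J^{M\text{-}M}_X)^{\mathrm T}=0$ and $J^{M\text{-}M}_X(J^{M\text{-}M}_Z)^{\mathrm T}=E_{k-q}$. (b) If the glue code is compatible with the memory via $S,T$, then $H^{M\text{-}B}_X(J^{M\text{-}B}_Z)^{\mathrm T}=0$, $H^{M\text{-}B}_Z(J^{M\text{-}B}_X)^{\mathrm T}=0$ and $J^{M\text{-}B}_X(J^{M\text{-}B}_Z)^{\mathrm T}=E_k$.
   Context: All vectors are row vectors over $\mathbb F_2$; $\mathrm{rs}A$ is the row space, $\ker A=\{x:Ax^{\mathrm T}=0\}$, $VM=\{vM:v\in V\}$, $E_m$ the identity. The memory is a CSS subsystem code specified by $H_X\in\mathbb F_2^{r_X\times n}$, $H_Z\in\mathbb F_2^{r_Z\times n}$, $J_X,J_Z\in\mathbb F_2^{k\times n}$, $F_X,F_Z\in\mathbb F_2^{k_g\times n}$ satisfying $\ker H_X=\mathrm{rs}H_Z\oplus\mathrm{rs}J_Z\oplus\mathrm{rs}F_Z$, $\ker H_Z=\mathrm{rs}H_X\oplus\mathrm{rs}J_X\oplus\mathrm{rs}F_X$, $J_XJ_Z^{\mathrm T}=E_k$, $F_XF_Z^{\mathrm T}=E_{k_g}$. Let $v_1,\dots,v_q\in\mathrm{rs}J_Z$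 be linearly independent (representing $\Sigma$), $J_{Z,A}$ the matrix with rows $v_1,\dots,v_q$; extend to a basis $v_1,\dots,v_k$ of $\mathrm{rs}J_Z$ and let $J_{Z,C}$ have rows $v_{q+1},\dots,v_k$. Let $\bar J_Z$ be the invertible $k\times k$ matrix with $\binom{J_{Z,A}}{J_{Z,C}}=\bar J_ZJ_Z$ and define $J_{X,A}\in\mathbb F_2^{q\times n}$, $J_{X,C}\in\mathbb F_2^{(k-q)\times n}$ by $\binom{J_{X,A}}{J_{X,C}}=(\bar J_Z^{-1})^{\mathrm T}J_X$. A glue code $H_G\in\mathbb F_2^{r_G\times n_G}$ is compatible via pasting matrices $S\in\mathbb F_2^{n_G\times n}$, $T\in\mathbb F_2^{r_X\times r_G}$ if $H_XS^{\mathrm T}=TH_G$; it is finely devised for $\Sigma$ if there exist $u_1,u_2,\dots\in\mathrm{rs}H_Z\oplus\mathrm{rs}F_Z$ with $\mathrm{span}(v_1,\dots,v_q,u_1,u_2,\dots)=(\ker H_G)S$. Measurement-sticker deformed code: coordinates are split into blocks $u_0\in\mathbb F_2^n$, $u_1,\dots,u_{d_R-1}\in\mathbb F_2^{n_G}$, $w_1,\dots,w_{d_R}\in\mathbb F_2^{r_G}$. $H^{M\text{-}M}_X$ has row-block $0$ equal to $H_X$ on $u_0$ and $T$ on $w_1$, and for $1\le j\le d_R-1$ row-block $j$ equal to $H_G$ on $u_j$, $E_{r_G}$ on $w_j$ and $E_{r_G}$ on $w_{j+1}$ (zero elsewhere). $H^{M\text{-}M}_Z$ has row-block $0$ equal to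 $H_Z$ on $u_0$, and for $1\le i\le d_R$ row-block $i$ equal to $S$ on $u_0$ (only if $i=1$), $E_{n_G}$ on $u_{i-1}$ (only if $i\ge2$), $E_{n_G}$ on $u_i$ (only if $i\le d_R-1$), and $H_G^{\mathrm T}$ on $w_i$. $J^{M\text{-}M}_X$ equals $J_{X,C}$ on $u_0$, $J_{X,C}S^{\mathrm T}$ on each of $u_1,\dots,u_{d_R-1}$, $0$ on $w_1,\dots,w_{d_R-1}$ and $\gamma$ on $w_{d_R}$; $J^{M\text{-}M}_Z$ equals $J_{Z,C}$ on $u_0$ and $0$ elsewhere. Branch-sticker deformed code: blocks $u_0\in\mathbb F_2^n$, $u_1,\dots,u_{d_R-1}\in\mathbb F_2^{n_G}$, $w_1,\dots,w_{d_R-1}\in\mathbb F_2^{r_G}$. $H^{M\text{-}B}_X$ has row-block $0$ equal to $H_X$ on $u_0$ and $T$ on $w_1$, and for $1\le j\le d_R-1$ row-block $j$ equal to $H_G$ on $u_j$, $E_{r_G}$ on $w_j$ and $E_{r_G}$ on $w_{j+1}$ (the latter only if $j\le d_R-2$). $H^{M\text{-}B}_Z$ has row-block $0$ equal to $H_Z$ on $u_0$, and for $1\le i\le d_R-1$ row-block $i$ equal to $S$ on $u_0$ (only if $i=1$), $E_{n_G}$ on $u_{i-1}$ (only if $i\ge2$), $E_{n_G}$ on $u_i$, and $H_G^{\mathrm T}$ on $w_i$. With $J'_X=\binom{J_{X,A}}{J_{X,C}}$, $J'_Z=\binom{J_{Z,A}}{J_{Z,C}}$: $J^{M\text{-}B}_X$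 equals $J'_X$ on $u_0$, $J'_XS^{\mathrm T}$ on each $u_j$ and $0$ on all $w_j$; $J^{M\text{-}B}_Z$ equals $J'_Z$ on $u_0$ and $0$ elsewhere. *)

theory Defs
  imports "Jordan_Normal_Form.Matrix" "HOL-Library.Z2"
begin

text \<open>Matrices over F_2 are JNF matrices with entries in the field type bit.
  A row vector of length n is represented by a JNF vector in carrier_vec n.\<close>

definition rs :: "'a::comm_ring_1 mat \<Rightarrow> 'a vec set" where
  "rs A = {transpose_mat A *\<^sub>v c | c. c \<in> carrier_vec (dim_row A)}"

definition ker :: "'a::comm_ring_1 mat \<Rightarrow> 'a vec set" where
  "ker A = {x \<in> carrier_vec (dim_col A). A *\<^sub>v x = 0\<^sub>v (dim_row A)}"

definition sum_sp :: "'a::comm_ring_1 vec set \<Rightarrow> 'a vec set \<Rightarrow> 'a vec set" where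
  "sum_sp U V = {u + v | u v. u \<in> U \<and> v \<in> V}"

definition is_dsum3 :: "nat \<Rightarrow> 'a::comm_ring_1 vec set \<Rightarrow> 'a vec set \<Rightarrow> 'a vec set \<Rightarrow> 'a vec set \<Rightarrow> bool" where
  "is_dsum3 n X U V W \<longleftrightarrow>
     X = sum_sp (sum_sp U V) W \<and>
     (\<forall>u\<in>U. \<forall>v\<in>V. \<forall>w\<in>W. u + v + w = 0\<^sub>v n \<longrightarrow> u = 0\<^sub>v n \<and> v = 0\<^sub>v n \<and> w = 0\<^sub>v n)"

text \<open>Generic block matrix: row block sizes rsz, column block sizes csz, block (a,b) given by B a b
  (which should be a (rsz!a) x (csz!b) matrix).\<close>
fun locate :: "nat list \<Rightarrow> nat \<Rightarrow> nat \<times> nat" where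
  "locate [] i = (0, i)"
| "locate (s # ss) i = (if i < s then (0, i) else (let (a, r) = locate ss (i - s) in (Suc a, r)))"

definition block_mat :: "nat list \<Rightarrow> nat list \<Rightarrow> (nat \<Rightarrow> nat \<Rightarrow> 'a mat) \<Rightarrow> 'a mat" where
  "block_mat rsz csz B = mat (sum_list rsz) (sum_list csz)
     (\<lambda>(i, j). let (a, i') = locate rsz i; (b, j') = locate csz j in B a b $$ (i', j'))"

definition compatible :: "bit mat \<Rightarrow> bit mat \<Rightarrow> bit mat \<Rightarrow> bit mat \<Rightarrow> bool" where
  "compatible HX HG S T \<longleftrightarrow> HX * transpose_mat S = T * HG"

text \<open>Finely devised: there are u_1,u_2,... in rs HZ + rs FZ such that
  span(v_1..v_q,u_1,u_2,...) = (ker HG) S; the span of a list of vectors is the row space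
  of the matrix having them as rows.\<close>
definition finely_devised :: "nat \<Rightarrow> bit mat \<Rightarrow> bit mat \<Rightarrow> bit mat \<Rightarrow> bit mat \<Rightarrow> bit mat \<Rightarrow> bool" where
  "finely_devised n HZ FZ JZA HG S \<longleftrightarrow>
     (\<exists>us. set us \<subseteq> carrier_vec n \<inter> sum_sp (rs HZ) (rs FZ) \<and>
        rs (mat_of_rows n (rows JZA @ us)) = {transpose_mat S *\<^sub>v x | x. x \<in> ker HG})"

text \<open>Column block indices: block 0 is u_0, block j (1 <= j <= d_R - 1) is u_j,
  block d_R + i - 1 is w_i.\<close>
definition wcol :: "nat \<Rightarrow> nat \<Rightarrow> nat" where
  "wcol dR i = dR + i - 1"

definition colsMM :: "nat \<Rightarrow> nat \<Rightarrow> nat \<Rightarrow> nat \<Rightarrow> nat list" where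
  "colsMM dR n nG rG = n # replicate (dR - 1) nG @ replicate dR rG"

definition colsMB :: "nat \<Rightarrow> nat \<Rightarrow> nat \<Rightarrow> nat \<Rightarrow> nat list" where
  "colsMB dR n nG rG = n # replicate (dR - 1) nG @ replicate (dR - 1) rG"

definition HX_MM :: "nat \<Rightarrow> nat \<Rightarrow> nat \<Rightarrow> nat \<Rightarrow> nat \<Rightarrow> bit mat \<Rightarrow> bit mat \<Rightarrow> bit mat \<Rightarrow> bit mat" where
  "HX_MM dR n nG rG rX HX HG T =
     (let cs = colsMM dR n nG rG; rsz = rX # replicate (dR - 1) rG in
      block_mat rsz cs (\<lambda>a b.
        if a = 0 then
          (if b = 0 then HX else if b = wcol dR 1 then T else 0\<^sub>m (rsz ! a) (cs ! b))
        else
          (if b = a then HG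
           else if b = wcol dR a then 1\<^sub>m rG
           else if b = wcol dR (a + 1) then 1\<^sub>m rG
           else 0\<^sub>m (rsz ! a) (cs ! b))))"

definition HZ_MM :: "nat \<Rightarrow> nat \<Rightarrow> nat \<Rightarrow> nat \<Rightarrow> nat \<Rightarrow> bit mat \<Rightarrow> bit mat \<Rightarrow> bit mat \<Rightarrow> bit mat" where
  "HZ_MM dR n nG rG rZ HZ HG S =
     (let cs = colsMM dR n nG rG; rsz = rZ # replicate dR nG in
      block_mat rsz cs (\<lambda>a b.
        if a = 0 then
          (if b = 0 then HZ else 0\<^sub>m (rsz ! a) (cs ! b))
        else
          (if b = 0 \<and> a = 1 then S
           else if a \<ge> 2 \<and> b = a - 1 then 1\<^sub>m nG
           else if a \<le> dR - 1 \<and> b = a then 1\<^sub>m nG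
           else if b = wcol dR a then transpose_mat HG
           else 0\<^sub>m (rsz ! a) (cs ! b))))"

definition JX_MM :: "nat \<Rightarrow> nat \<Rightarrow> nat \<Rightarrow> nat \<Rightarrow> nat \<Rightarrow> bit mat \<Rightarrow> bit mat \<Rightarrow> bit mat \<Rightarrow> bit mat" where
  "JX_MM dR n nG rG m JXC S \<gamma> =
     (let cs = colsMM dR n nG rG; rsz = [m] in
      block_mat rsz cs (\<lambda>a b.
        if b = 0 then JXC
        else if 1 \<le> b \<and> b \<le> dR - 1 then JXC * transpose_mat S
        else if b = wcol dR dR then \<gamma>
        else 0\<^sub>m (rsz ! a) (cs ! b)))"

definition JZ_MM :: "nat \<Rightarrow> nat \<Rightarrow> nat \<Rightarrow> nat \<Rightarrow> nat \<Rightarrow> bit mat \<Rightarrow> bit mat" where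
  "JZ_MM dR n nG rG m JZC =
     (let cs = colsMM dR n nG rG; rsz = [m] in
      block_mat rsz cs (\<lambda>a b. if b = 0 then JZC else 0\<^sub>m (rsz ! a) (cs ! b)))"

definition HX_MB :: "nat \<Rightarrow> nat \<Rightarrow> nat \<Rightarrow> nat \<Rightarrow> nat \<Rightarrow> bit mat \<Rightarrow> bit mat \<Rightarrow> bit mat \<Rightarrow> bit mat" where
  "HX_MB dR n nG rG rX HX HG T =
     (let cs = colsMB dR n nG rG; rsz = rX # replicate (dR - 1) rG in
      block_mat rsz cs (\<lambda>a b.
        if a = 0 then
          (if b = 0 then HX else if b = wcol dR 1 then T else 0\<^sub>m (rsz ! a) (cs ! b))
        else
          (if b = a then HG
           else if b = wcol dR a then 1\<^sub>m rG
           else if a \<le> dR - 2 \<and> b = wcol dR (a + 1) then 1\<^sub>m rG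
           else 0\<^sub>m (rsz ! a) (cs ! b))))"

definition HZ_MB :: "nat \<Rightarrow> nat \<Rightarrow> nat \<Rightarrow> nat \<Rightarrow> nat \<Rightarrow> bit mat \<Rightarrow> bit mat \<Rightarrow> bit mat \<Rightarrow> bit mat" where
  "HZ_MB dR n nG rG rZ HZ HG S =
     (let cs = colsMB dR n nG rG; rsz = rZ # replicate (dR - 1) nG in
      block_mat rsz cs (\<lambda>a b.
        if a = 0 then
          (if b = 0 then HZ else 0\<^sub>m (rsz ! a) (cs ! b))
        else
          (if b = 0 \<and> a = 1 then S
           else if a \<ge> 2 \<and> b = a - 1 then 1\<^sub>m nG
           else if b = a then 1\<^sub>m nG
           else if b = wcol dR a then transpose_mat HG
           else 0\<^sub>m (rsz ! a) (cs ! b))))"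

definition JX_MB :: "nat \<Rightarrow> nat \<Rightarrow> nat \<Rightarrow> nat \<Rightarrow> nat \<Rightarrow> bit mat \<Rightarrow> bit mat \<Rightarrow> bit mat" where
  "JX_MB dR n nG rG m JX' S =
     (let cs = colsMB dR n nG rG; rsz = [m] in
      block_mat rsz cs (\<lambda>a b.
        if b = 0 then JX'
        else if 1 \<le> b \<and> b \<le> dR - 1 then JX' * transpose_mat S
        else 0\<^sub>m (rsz ! a) (cs ! b)))"

definition JZ_MB :: "nat \<Rightarrow> nat \<Rightarrow> nat \<Rightarrow> nat \<Rightarrow> nat \<Rightarrow> bit mat \<Rightarrow> bit mat" where
  "JZ_MB dR n nG rG m JZ' =
     (let cs = colsMB dR n nG rG; rsz = [m] in
      block_mat rsz cs (\<lambda>a b. if b = 0 then JZ' else 0\<^sub>m (rsz ! a) (cs ! b)))"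

end

theory Submission
  imports Defs
begin


declare sum_of_bool_eq[simp del] mult_bit_eq_and[simp del] add_bit_eq_xor[simp del]

lemma bit_add_self[simp]: "(x::bit) + x = 0" by (cases x) auto

lemma locate_bound: "i < sum_list ss \<Longrightarrow> fst (locate ss i) < length ss \<and> snd (locate ss i) < ss ! fst (locate ss i)"
proof (induction ss arbitrary: i)
  case Nil then show ?case by simp
next
  case (Cons s ss)
  show ?case
  proof (cases "i < s")
    case True then show ?thesis by simp
  next
    case False
    with Cons.prems have "i - s < sum_list ss" by simp
    from Cons.IH[OF this] False show ?thesis by (auto split: prod.split)
  qed
qed

lemma sum_lt_add: "sum f {..<s+t} = sum f {..<s} + sum (\<lambda>c. f (s+c)) {..<(t::nat)}"
  by (induction t) (auto simp: add.assoc)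

lemma block_sum:
  "(\<Sum>c<sum_list cs. f (locate cs c)) = (\<Sum>b<length cs. \<Sum>r<cs!b. f (b, r))"
proof (induction cs arbitrary: f)
  case Nil then show ?case by simp
next
  case (Cons s ss)
  have "(\<Sum>c<sum_list (s#ss). f (locate (s#ss) c)) =
        (\<Sum>c<s. f (locate (s#ss) c)) + (\<Sum>c<sum_list ss. f (locate (s#ss) (s + c)))"
    by (simp add: sum_lt_add)
  also have "(\<Sum>c<s. f (locate (s#ss) c)) = (\<Sum>r<s. f (0, r))" by simp
  also have "(\<Sum>c<sum_list ss. f (locate (s#ss) (s + c))) = (\<Sum>c<sum_list ss. (\<lambda>p. f (Suc (fst p), snd p)) (locate ss c))"
    by (rule sum.cong) (auto split: prod.split)
  also have "\<dots> = (\<Sum>b<length ss. \<Sum>r<ss!b. f (Suc b, r))" using Cons.IH[of "\<lambda>p. f (Suc (fst p), snd p)"] by simp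
  finally show ?case by (simp only: length_Cons sum.lessThan_Suc_shift) simp
qed

lemma block_prod_entry:
  assumes "i < sum_list rsz" "j < m" "locate rsz i = (a, i')"
  shows "(block_mat rsz cs A * transpose_mat (block_mat [m] cs B)) $$ (i,j)
     = (\<Sum>b<length cs. \<Sum>r<cs!b. A a b $$ (i',r) * B 0 b $$ (j,r))"
proof -
  have "(block_mat rsz cs A * transpose_mat (block_mat [m] cs B)) $$ (i,j)
     = (\<Sum>c<sum_list cs. (\<lambda>p. A a (fst p) $$ (i', snd p) * B 0 (fst p) $$ (j, snd p)) (locate cs c))"
    using assms
    by (auto simp: block_mat_def scalar_prod_def lessThan_atLeast0 intro!: sum.cong split: prod.split)
  also have "\<dots> = (\<Sum>b<length cs. \<Sum>r<cs!b. A a b $$ (i',r) * B 0 b $$ (j,r))"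
    by (subst block_sum) simp
  finally show ?thesis .
qed

lemma ent: "A \<in> carrier_mat a c \<Longrightarrow> B \<in> carrier_mat b c \<Longrightarrow> i<a \<Longrightarrow> j<b \<Longrightarrow>
   (\<Sum>r<c. A$$(i,r)*B$$(j,r)) = (A * transpose_mat B)$$(i,j)"
  by (auto simp: scalar_prod_def lessThan_atLeast0 intro!: sum.cong)

lemma sum1: assumes "b1 < N" "(\<forall>b<N. b \<noteq> b1 \<longrightarrow> g b = 0)" shows "(\<Sum>b<(N::nat). g b) = (g b1 :: 'a::comm_monoid_add)"
proof -
  have "(\<Sum>b<N. g b) = (\<Sum>b\<in>{b1}. g b)"
    by (rule sum.mono_neutral_right) (use assms in auto)
  then show ?thesis by simp
qed

lemma sum2: "b1 < N \<Longrightarrow> b2 < N \<Longrightarrow> b1 \<noteq> b2 \<Longrightarrow> (\<forall>b<N. b \<noteq> b1 \<longrightarrow> b \<noteq> b2 \<longrightarrow> g b = 0) \<Longrightarrow> (\<Sum>b<(N::nat). g b) = (g b1 + g b2 :: 'a::comm_monoid_add)"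
proof -
  assume "b1 < N" "b2 < N" "b1 \<noteq> b2" "\<forall>b<N. b \<noteq> b1 \<longrightarrow> b \<noteq> b2 \<longrightarrow> g b = 0"
  then have "(\<Sum>b<N. g b) = (\<Sum>b\<in>{b1,b2}. g b)"
    by (intro sum.mono_neutral_right) (auto simp del: insert_iff)
  then show ?thesis using \<open>b1 \<noteq> b2\<close> by simp
qed


lemma length_colsMM: "dR \<ge> 1 \<Longrightarrow> length (colsMM dR n nG rG) = 2*dR"
  by (simp add: colsMM_def)
lemma nth_colsMM: "dR \<ge> 1 \<Longrightarrow> b < 2*dR \<Longrightarrow> colsMM dR n nG rG ! b = (if b = 0 then n else if b < dR then nG else rG)"
  by (auto simp: colsMM_def nth_append nth_Cons')
lemma length_colsMB: "dR \<ge> 1 \<Longrightarrow> length (colsMB dR n nG rG) = 2*dR - 1"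
  by (simp add: colsMB_def)
lemma nth_colsMB: "dR \<ge> 1 \<Longrightarrow> b < 2*dR - 1 \<Longrightarrow> colsMB dR n nG rG ! b = (if b = 0 then n else if b < dR then nG else rG)"
  by (auto simp: colsMB_def nth_append nth_Cons')

lemma idterm: "(X::'a::comm_ring_1 mat) \<in> carrier_mat m c \<Longrightarrow> i<c \<Longrightarrow> j<m \<Longrightarrow> (\<Sum>r<c. (1\<^sub>m c)$$(i,r) * X$$(j,r)) = X$$(j,i)"
  by (subst ent[of _ c c X m]) auto

lemma trterm: "(A::'a::comm_ring_1 mat) \<in> carrier_mat a c \<Longrightarrow> B \<in> carrier_mat b c \<Longrightarrow> i<a \<Longrightarrow> j<b \<Longrightarrow>
   (\<Sum>r<c. A$$(i,r)*B$$(j,r)) = (B * transpose_mat A)$$(j,i)"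
  by (subst ent[of B b c A a j i, symmetric]) (simp_all add: mult.commute)



lemma G2:
  assumes dR: "dR \<ge> 2" and HZ: "HZ \<in> carrier_mat rZ n" and JXC: "JXC \<in> carrier_mat m n"
    and HG: "HG \<in> carrier_mat rG nG" and S: "S \<in> carrier_mat nG n" and ga: "\<gamma> \<in> carrier_mat m rG"
    and F2: "HZ * transpose_mat JXC = 0\<^sub>m rZ m" and gam: "JXC * transpose_mat S = \<gamma> * HG"
  shows "HZ_MM dR n nG rG rZ HZ HG S * transpose_mat (JX_MM dR n nG rG m JXC S \<gamma>) = 0\<^sub>m (rZ + dR * nG) m"
proof -
  define cs where "cs = colsMM dR n nG rG"
  define rsz where "rsz = rZ # replicate dR nG"
  define A where "A = (\<lambda>a b.
        if a = 0 then
          (if b = 0 then HZ else 0\<^sub>m (rsz ! a) (cs ! b))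
        else
          (if b = 0 \<and> a = 1 then S
           else if a \<ge> 2 \<and> b = a - 1 then 1\<^sub>m nG
           else if a \<le> dR - 1 \<and> b = a then 1\<^sub>m nG
           else if b = wcol dR a then transpose_mat HG
           else 0\<^sub>m (rsz ! a) (cs ! b)))"
  define B where "B = (\<lambda>a b.
        if b = 0 then JXC
        else if 1 \<le> b \<and> b \<le> dR - 1 then JXC * transpose_mat S
        else if b = wcol dR dR then \<gamma>
        else 0\<^sub>m ([m] ! a) (cs ! b))"
  have e1: "HZ_MM dR n nG rG rZ HZ HG S = block_mat rsz cs A"
    unfolding HZ_MM_def A_def cs_def rsz_def Let_def ..
  have e2: "JX_MM dR n nG rG m JXC S \<gamma> = block_mat [m] cs B"
    unfolding JX_MM_def B_def cs_def Let_def ..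
  have lcs: "length cs = 2*dR" using dR by (simp add: cs_def length_colsMM)
  have ncs: "\<And>b. b < 2*dR \<Longrightarrow> cs ! b = (if b = 0 then n else if b < dR then nG else rG)"
    using dR by (simp add: cs_def nth_colsMM)
  show ?thesis unfolding e1 e2
  proof (rule eq_matI)
    show "dim_row (block_mat rsz cs A * transpose_mat (block_mat [m] cs B)) = dim_row (0\<^sub>m (rZ + dR * nG) m)"
      by (simp add: block_mat_def rsz_def sum_list_replicate)
    show "dim_col (block_mat rsz cs A * transpose_mat (block_mat [m] cs B)) = dim_col (0\<^sub>m (rZ + dR * nG) m)"
      by (simp add: block_mat_def)
    fix i j assume i: "i < dim_row (0\<^sub>m (rZ + dR * nG) m)" and j: "j < dim_col (0\<^sub>m (rZ + dR * nG) m)"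
    obtain a i' where loc: "locate rsz i = (a,i')" by (cases "locate rsz i")
    have isl: "i < sum_list rsz" using i by (simp add: rsz_def sum_list_replicate)
    from locate_bound[OF isl] loc have a: "a < dR + 1" and i': "i' < rsz ! a" by (auto simp: rsz_def)
    have jm: "j < m" using j by simp
    have "(block_mat rsz cs A * transpose_mat (block_mat [m] cs B)) $$ (i,j) =
       (\<Sum>b<2*dR. \<Sum>r<cs!b. A a b $$ (i',r) * B 0 b $$ (j,r))"
      by (subst block_prod_entry[OF isl jm loc]) (simp only: lcs)
    also have "\<dots> = 0"
    proof -
      consider "a = 0" | "a = 1" | "2 \<le> a" "a \<le> dR - 1" | "a = dR" using a dR by linarith
      then show ?thesis
      proof cases
        case 1
        have i'': "i' < rZ" using i' 1 by (simp add: rsz_def)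
        have "(\<Sum>b<2*dR. \<Sum>r<cs!b. A a b $$ (i',r) * B 0 b $$ (j,r)) = (\<Sum>r<cs!0. A a 0 $$ (i',r) * B 0 0 $$ (j,r))"
          apply (rule sum1)
          using dR apply simp
          using i' jm 1 by (auto simp: A_def B_def wcol_def ncs intro!: sum.neutral)
        also have "\<dots> = (\<Sum>r<n. HZ $$ (i',r) * JXC $$ (j,r))"
          using 1 ncs[of 0] dR by (simp add: A_def B_def)
        also have "\<dots> = (HZ * transpose_mat JXC) $$ (i',j)" by (rule ent[OF HZ JXC i'' jm])
        finally show ?thesis using F2 i'' jm by simp
      next
        case 2
        have i'': "i' < nG" using i' 2 dR by (simp add: rsz_def)
        have "(\<Sum>b<2*dR. \<Sum>r<cs!b. A a b $$ (i',r) * B 0 b $$ (j,r)) = (\<Sum>r<cs!0. A a 0 $$ (i',r) * B 0 0 $$ (j,r)) + (\<Sum>r<cs!1. A a 1 $$ (i',r) * B 0 1 $$ (j,r))"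
          apply (rule sum2)
          using dR apply simp_all
          using i' jm 2 dR by (auto simp: A_def B_def wcol_def ncs intro!: sum.neutral)
        also have "(\<Sum>r<cs!0. A a 0 $$ (i',r) * B 0 0 $$ (j,r)) = (\<Sum>r<n. S $$ (i',r) * JXC $$ (j,r))"
          using 2 ncs[of 0] dR by (simp add: A_def B_def)
        also have "\<dots> = (JXC * transpose_mat S) $$ (j,i')" by (rule trterm[OF S JXC i'' jm])
        also have "(\<Sum>r<cs!1. A a 1 $$ (i',r) * B 0 1 $$ (j,r)) = (\<Sum>r<nG. (1\<^sub>m nG) $$ (i',r) * (JXC * transpose_mat S) $$ (j,r))"
          using 2 ncs[of 1] dR by (simp add: A_def B_def)
        also have "\<dots> = (JXC * transpose_mat S) $$ (j,i')" by (rule idterm) (use JXC S i'' jm in auto)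
        finally show ?thesis by simp
      next
        case 3
        have i'': "i' < nG" using i' 3 dR by (simp add: rsz_def nth_Cons')
        have "(\<Sum>b<2*dR. \<Sum>r<cs!b. A a b $$ (i',r) * B 0 b $$ (j,r)) = (\<Sum>r<cs!(a-1). A a (a-1) $$ (i',r) * B 0 (a-1) $$ (j,r)) + (\<Sum>r<cs!a. A a a $$ (i',r) * B 0 a $$ (j,r))"
          apply (rule sum2)
          using dR 3 apply simp_all
          using i' jm 3 dR by (auto simp: A_def B_def wcol_def ncs intro!: sum.neutral)
        also have "(\<Sum>r<cs!(a-1). A a (a-1) $$ (i',r) * B 0 (a-1) $$ (j,r)) = (\<Sum>r<nG. (1\<^sub>m nG) $$ (i',r) * (JXC * transpose_mat S) $$ (j,r))"
          using 3 ncs[of "a-1"] dR by (auto simp add: A_def B_def wcol_def)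
        also have "\<dots> = (JXC * transpose_mat S) $$ (j,i')" by (rule idterm) (use JXC S i'' jm in auto)
        also have "(\<Sum>r<cs!a. A a a $$ (i',r) * B 0 a $$ (j,r)) = (\<Sum>r<nG. (1\<^sub>m nG) $$ (i',r) * (JXC * transpose_mat S) $$ (j,r))"
          using 3 ncs[of a] dR by (simp add: A_def B_def wcol_def)
        also have "\<dots> = (JXC * transpose_mat S) $$ (j,i')" by (rule idterm) (use JXC S i'' jm in auto)
        finally show ?thesis by simp
      next
        case 4
        have i'': "i' < nG" using i' 4 dR by (simp add: rsz_def)
        have "(\<Sum>b<2*dR. \<Sum>r<cs!b. A a b $$ (i',r) * B 0 b $$ (j,r)) = (\<Sum>r<cs!(dR-1). A a (dR-1) $$ (i',r) * B 0 (dR-1) $$ (j,r)) + (\<Sum>r<cs!(2*dR-1). A a (2*dR-1) $$ (i',r) * B 0 (2*dR-1) $$ (j,r))"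
          apply (rule sum2)
          using dR 4 apply simp_all
          using i' jm 4 dR by (auto simp: A_def B_def wcol_def ncs intro!: sum.neutral)
        also have "(\<Sum>r<cs!(dR-1). A a (dR-1) $$ (i',r) * B 0 (dR-1) $$ (j,r)) = (\<Sum>r<nG. (1\<^sub>m nG) $$ (i',r) * (JXC * transpose_mat S) $$ (j,r))"
          using 4 ncs[of "dR-1"] dR by (simp add: A_def B_def)
        also have "\<dots> = (JXC * transpose_mat S) $$ (j,i')" by (rule idterm) (use JXC S i'' jm in auto)
        also have "(\<Sum>r<cs!(2*dR-1). A a (2*dR-1) $$ (i',r) * B 0 (2*dR-1) $$ (j,r)) = (\<Sum>r<rG. transpose_mat HG $$ (i',r) * \<gamma> $$ (j,r))"
          using 4 ncs[of "2*dR-1"] dR by (simp add: A_def B_def wcol_def)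
        also have "\<dots> = (\<gamma> * transpose_mat (transpose_mat HG)) $$ (j,i')" by (rule trterm) (use HG ga i'' jm in auto)
        also have "\<dots> = (JXC * transpose_mat S) $$ (j,i')" using gam by simp
        finally show ?thesis by simp
      qed
    qed
    finally show "(block_mat rsz cs A * transpose_mat (block_mat [m] cs B)) $$ (i,j) = 0\<^sub>m (rZ + dR * nG) m $$ (i,j)"
      using i j by simp
  qed
qed



lemma G1:
  assumes dR: "dR \<ge> 2" and HX: "HX \<in> carrier_mat rX n" and JZC: "JZC \<in> carrier_mat m n"
    and F1: "HX * transpose_mat JZC = 0\<^sub>m rX m"
  shows "HX_MM dR n nG rG rX HX HG T * transpose_mat (JZ_MM dR n nG rG m JZC) = 0\<^sub>m (rX + (dR - 1) * rG) m"
proof -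
  define cs where "cs = colsMM dR n nG rG"
  define rsz where "rsz = rX # replicate (dR - 1) rG"
  define A where "A = (\<lambda>a b.
        if a = 0 then
          (if b = 0 then HX else if b = wcol dR 1 then T else 0\<^sub>m (rsz ! a) (cs ! b))
        else
          (if b = a then HG
           else if b = wcol dR a then 1\<^sub>m rG
           else if b = wcol dR (a + 1) then 1\<^sub>m rG
           else 0\<^sub>m (rsz ! a) (cs ! b)))"
  define B where "B = (\<lambda>a b. if b = 0 then JZC else 0\<^sub>m ([m] ! a) (cs ! b))"
  have e1: "HX_MM dR n nG rG rX HX HG T = block_mat rsz cs A"
    unfolding HX_MM_def A_def cs_def rsz_def Let_def ..
  have e2: "JZ_MM dR n nG rG m JZC = block_mat [m] cs B"
    unfolding JZ_MM_def B_def cs_def Let_def ..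
  have lcs: "length cs = 2*dR" using dR by (simp add: cs_def length_colsMM)
  have ncs: "\<And>b. b < 2*dR \<Longrightarrow> cs ! b = (if b = 0 then n else if b < dR then nG else rG)"
    using dR by (simp add: cs_def nth_colsMM)
  show ?thesis unfolding e1 e2
  proof (rule eq_matI)
    show "dim_row (block_mat rsz cs A * transpose_mat (block_mat [m] cs B)) = dim_row (0\<^sub>m (rX + (dR - 1) * rG) m)"
      by (simp add: block_mat_def rsz_def sum_list_replicate)
    show "dim_col (block_mat rsz cs A * transpose_mat (block_mat [m] cs B)) = dim_col (0\<^sub>m (rX + (dR - 1) * rG) m)"
      by (simp add: block_mat_def)
    fix i j assume i: "i < dim_row (0\<^sub>m (rX + (dR - 1) * rG) m)" and j: "j < dim_col (0\<^sub>m (rX + (dR - 1) * rG) m)"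
    obtain a i' where loc: "locate rsz i = (a,i')" by (cases "locate rsz i")
    have isl: "i < sum_list rsz" using i by (simp add: rsz_def sum_list_replicate)
    from locate_bound[OF isl] loc have a: "a < dR" and i': "i' < rsz ! a" using dR by (auto simp: rsz_def)
    have jm: "j < m" using j by simp
    have "(block_mat rsz cs A * transpose_mat (block_mat [m] cs B)) $$ (i,j) =
       (\<Sum>b<2*dR. \<Sum>r<cs!b. A a b $$ (i',r) * B 0 b $$ (j,r))"
      by (subst block_prod_entry[OF isl jm loc]) (simp only: lcs)
    also have "\<dots> = (\<Sum>r<cs!0. A a 0 $$ (i',r) * B 0 0 $$ (j,r))"
      apply (rule sum1)
      using dR apply simp
      using i' jm by (auto simp: A_def B_def wcol_def ncs intro!: sum.neutral)
    also have "\<dots> = 0"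
    proof (cases "a = 0")
      case True
      have i'': "i' < rX" using i' True by (simp add: rsz_def)
      have "(\<Sum>r<cs!0. A a 0 $$ (i',r) * B 0 0 $$ (j,r)) = (\<Sum>r<n. HX $$ (i',r) * JZC $$ (j,r))"
        using True ncs[of 0] dR by (simp add: A_def B_def)
      also have "\<dots> = (HX * transpose_mat JZC) $$ (i',j)" by (rule ent[OF HX JZC i'' jm])
      finally show ?thesis using F1 i'' jm by simp
    next
      case False
      then show ?thesis using i' jm dR ncs[of 0] by (auto simp: A_def B_def wcol_def intro!: sum.neutral)
    qed
    finally show "(block_mat rsz cs A * transpose_mat (block_mat [m] cs B)) $$ (i,j) = 0\<^sub>m (rX + (dR - 1) * rG) m $$ (i,j)"
      using i j by simp
  qed
qed

lemma G3:
  assumes dR: "dR \<ge> 2" and JXC: "JXC \<in> carrier_mat m n" and JZC: "JZC \<in> carrier_mat m n"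
    and F3: "JXC * transpose_mat JZC = 1\<^sub>m m"
  shows "JX_MM dR n nG rG m JXC S \<gamma> * transpose_mat (JZ_MM dR n nG rG m JZC) = 1\<^sub>m m"
proof -
  define cs where "cs = colsMM dR n nG rG"
  define A where "A = (\<lambda>a b.
        if b = 0 then JXC
        else if 1 \<le> b \<and> b \<le> dR - 1 then JXC * transpose_mat S
        else if b = wcol dR dR then \<gamma>
        else 0\<^sub>m ([m] ! a) (cs ! b))"
  define B where "B = (\<lambda>a b. if b = 0 then JZC else 0\<^sub>m ([m] ! a) (cs ! b))"
  have e1: "JX_MM dR n nG rG m JXC S \<gamma> = block_mat [m] cs A"
    unfolding JX_MM_def A_def cs_def Let_def ..
  have e2: "JZ_MM dR n nG rG m JZC = block_mat [m] cs B"
    unfolding JZ_MM_def B_def cs_def Let_def ..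
  have lcs: "length cs = 2*dR" using dR by (simp add: cs_def length_colsMM)
  have ncs: "\<And>b. b < 2*dR \<Longrightarrow> cs ! b = (if b = 0 then n else if b < dR then nG else rG)"
    using dR by (simp add: cs_def nth_colsMM)
  show ?thesis unfolding e1 e2
  proof (rule eq_matI)
    show "dim_row (block_mat [m] cs A * transpose_mat (block_mat [m] cs B)) = dim_row (1\<^sub>m m)"
      by (simp add: block_mat_def)
    show "dim_col (block_mat [m] cs A * transpose_mat (block_mat [m] cs B)) = dim_col (1\<^sub>m m)"
      by (simp add: block_mat_def)
    fix i j assume i: "i < dim_row (1\<^sub>m m)" and j: "j < dim_col (1\<^sub>m m)"
    have loc: "locate [m] i = (0,i)" using i by simp
    have isl: "i < sum_list [m]" using i by simp
    have jm: "j < m" and im: "i < m" using i j by auto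
    have "(block_mat [m] cs A * transpose_mat (block_mat [m] cs B)) $$ (i,j) =
       (\<Sum>b<2*dR. \<Sum>r<cs!b. A 0 b $$ (i,r) * B 0 b $$ (j,r))"
      by (subst block_prod_entry[OF isl jm loc]) (simp only: lcs)
    also have "\<dots> = (\<Sum>r<cs!0. A 0 0 $$ (i,r) * B 0 0 $$ (j,r))"
      apply (rule sum1)
      using dR apply simp
      using jm by (auto simp: B_def intro!: sum.neutral)
    also have "\<dots> = (\<Sum>r<n. JXC $$ (i,r) * JZC $$ (j,r))"
      using ncs[of 0] dR by (simp add: A_def B_def)
    also have "\<dots> = (JXC * transpose_mat JZC) $$ (i,j)" by (rule ent[OF JXC JZC im jm])
    finally show "(block_mat [m] cs A * transpose_mat (block_mat [m] cs B)) $$ (i,j) = 1\<^sub>m m $$ (i,j)"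
      using F3 by simp
  qed
qed



lemma G4:
  assumes dR: "dR \<ge> 2" and HX: "HX \<in> carrier_mat rX n" and JZC: "JZC \<in> carrier_mat m n"
    and F1: "HX * transpose_mat JZC = 0\<^sub>m rX m"
  shows "HX_MB dR n nG rG rX HX HG T * transpose_mat (JZ_MB dR n nG rG m JZC) = 0\<^sub>m (rX + (dR - 1) * rG) m"
proof -
  define cs where "cs = colsMB dR n nG rG"
  define rsz where "rsz = rX # replicate (dR - 1) rG"
  define A where "A = (\<lambda>a b.
        if a = 0 then
          (if b = 0 then HX else if b = wcol dR 1 then T else 0\<^sub>m (rsz ! a) (cs ! b))
        else
          (if b = a then HG
           else if b = wcol dR a then 1\<^sub>m rG
           else if a \<le> dR - 2 \<and> b = wcol dR (a + 1) then 1\<^sub>m rG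
           else 0\<^sub>m (rsz ! a) (cs ! b)))"
  define B where "B = (\<lambda>a b. if b = 0 then JZC else 0\<^sub>m ([m] ! a) (cs ! b))"
  have e1: "HX_MB dR n nG rG rX HX HG T = block_mat rsz cs A"
    unfolding HX_MB_def A_def cs_def rsz_def Let_def ..
  have e2: "JZ_MB dR n nG rG m JZC = block_mat [m] cs B"
    unfolding JZ_MB_def B_def cs_def Let_def ..
  have lcs: "length cs = (2*dR-1)" using dR by (simp add: cs_def length_colsMB)
  have ncs: "\<And>b. b < (2*dR-1) \<Longrightarrow> cs ! b = (if b = 0 then n else if b < dR then nG else rG)"
    using dR by (simp add: cs_def nth_colsMB)
  show ?thesis unfolding e1 e2
  proof (rule eq_matI)
    show "dim_row (block_mat rsz cs A * transpose_mat (block_mat [m] cs B)) = dim_row (0\<^sub>m (rX + (dR - 1) * rG) m)"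
      by (simp add: block_mat_def rsz_def sum_list_replicate)
    show "dim_col (block_mat rsz cs A * transpose_mat (block_mat [m] cs B)) = dim_col (0\<^sub>m (rX + (dR - 1) * rG) m)"
      by (simp add: block_mat_def)
    fix i j assume i: "i < dim_row (0\<^sub>m (rX + (dR - 1) * rG) m)" and j: "j < dim_col (0\<^sub>m (rX + (dR - 1) * rG) m)"
    obtain a i' where loc: "locate rsz i = (a,i')" by (cases "locate rsz i")
    have isl: "i < sum_list rsz" using i by (simp add: rsz_def sum_list_replicate)
    from locate_bound[OF isl] loc have a: "a < dR" and i': "i' < rsz ! a" using dR by (auto simp: rsz_def)
    have jm: "j < m" using j by simp
    have "(block_mat rsz cs A * transpose_mat (block_mat [m] cs B)) $$ (i,j) =
       (\<Sum>b<(2*dR-1). \<Sum>r<cs!b. A a b $$ (i',r) * B 0 b $$ (j,r))"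
      by (subst block_prod_entry[OF isl jm loc]) (simp only: lcs)
    also have "\<dots> = (\<Sum>r<cs!0. A a 0 $$ (i',r) * B 0 0 $$ (j,r))"
      apply (rule sum1)
      using dR apply simp
      using i' jm by (auto simp: A_def B_def wcol_def ncs intro!: sum.neutral)
    also have "\<dots> = 0"
    proof (cases "a = 0")
      case True
      have i'': "i' < rX" using i' True by (simp add: rsz_def)
      have "(\<Sum>r<cs!0. A a 0 $$ (i',r) * B 0 0 $$ (j,r)) = (\<Sum>r<n. HX $$ (i',r) * JZC $$ (j,r))"
        using True ncs[of 0] dR by (simp add: A_def B_def)
      also have "\<dots> = (HX * transpose_mat JZC) $$ (i',j)" by (rule ent[OF HX JZC i'' jm])
      finally show ?thesis using F1 i'' jm by simp
    next
      case False
      then show ?thesis using i' jm dR ncs[of 0] by (auto simp: A_def B_def wcol_def intro!: sum.neutral)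
    qed
    finally show "(block_mat rsz cs A * transpose_mat (block_mat [m] cs B)) $$ (i,j) = 0\<^sub>m (rX + (dR - 1) * rG) m $$ (i,j)"
      using i j by simp
  qed
qed

lemma G6:
  assumes dR: "dR \<ge> 2" and JXC: "JXC \<in> carrier_mat m n" and JZC: "JZC \<in> carrier_mat m n"
    and F3: "JXC * transpose_mat JZC = 1\<^sub>m m"
  shows "JX_MB dR n nG rG m JXC S * transpose_mat (JZ_MB dR n nG rG m JZC) = 1\<^sub>m m"
proof -
  define cs where "cs = colsMB dR n nG rG"
  define A where "A = (\<lambda>a b.
        if b = 0 then JXC
        else if 1 \<le> b \<and> b \<le> dR - 1 then JXC * transpose_mat S
        else 0\<^sub>m ([m] ! a) (cs ! b))"
  define B where "B = (\<lambda>a b. if b = 0 then JZC else 0\<^sub>m ([m] ! a) (cs ! b))"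
  have e1: "JX_MB dR n nG rG m JXC S = block_mat [m] cs A"
    unfolding JX_MB_def A_def cs_def Let_def ..
  have e2: "JZ_MB dR n nG rG m JZC = block_mat [m] cs B"
    unfolding JZ_MB_def B_def cs_def Let_def ..
  have lcs: "length cs = (2*dR-1)" using dR by (simp add: cs_def length_colsMB)
  have ncs: "\<And>b. b < (2*dR-1) \<Longrightarrow> cs ! b = (if b = 0 then n else if b < dR then nG else rG)"
    using dR by (simp add: cs_def nth_colsMB)
  show ?thesis unfolding e1 e2
  proof (rule eq_matI)
    show "dim_row (block_mat [m] cs A * transpose_mat (block_mat [m] cs B)) = dim_row (1\<^sub>m m)"
      by (simp add: block_mat_def)
    show "dim_col (block_mat [m] cs A * transpose_mat (block_mat [m] cs B)) = dim_col (1\<^sub>m m)"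
      by (simp add: block_mat_def)
    fix i j assume i: "i < dim_row (1\<^sub>m m)" and j: "j < dim_col (1\<^sub>m m)"
    have loc: "locate [m] i = (0,i)" using i by simp
    have isl: "i < sum_list [m]" using i by simp
    have jm: "j < m" and im: "i < m" using i j by auto
    have "(block_mat [m] cs A * transpose_mat (block_mat [m] cs B)) $$ (i,j) =
       (\<Sum>b<(2*dR-1). \<Sum>r<cs!b. A 0 b $$ (i,r) * B 0 b $$ (j,r))"
      by (subst block_prod_entry[OF isl jm loc]) (simp only: lcs)
    also have "\<dots> = (\<Sum>r<cs!0. A 0 0 $$ (i,r) * B 0 0 $$ (j,r))"
      apply (rule sum1)
      using dR apply simp
      using jm by (auto simp: B_def intro!: sum.neutral)
    also have "\<dots> = (\<Sum>r<n. JXC $$ (i,r) * JZC $$ (j,r))"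
      using ncs[of 0] dR by (simp add: A_def B_def)
    also have "\<dots> = (JXC * transpose_mat JZC) $$ (i,j)" by (rule ent[OF JXC JZC im jm])
    finally show "(block_mat [m] cs A * transpose_mat (block_mat [m] cs B)) $$ (i,j) = 1\<^sub>m m $$ (i,j)"
      using F3 by simp
  qed
qed



lemma G5:
  assumes dR: "dR \<ge> 2" and HZ: "HZ \<in> carrier_mat rZ n" and JXC: "JXC \<in> carrier_mat m n"
    and HG: "HG \<in> carrier_mat rG nG" and S: "S \<in> carrier_mat nG n"
    and F2: "HZ * transpose_mat JXC = 0\<^sub>m rZ m"
  shows "HZ_MB dR n nG rG rZ HZ HG S * transpose_mat (JX_MB dR n nG rG m JXC S) = 0\<^sub>m (rZ + (dR - 1) * nG) m"
proof -
  define cs where "cs = colsMB dR n nG rG"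
  define rsz where "rsz = rZ # replicate (dR - 1) nG"
  define A where "A = (\<lambda>a b.
        if a = 0 then
          (if b = 0 then HZ else 0\<^sub>m (rsz ! a) (cs ! b))
        else
          (if b = 0 \<and> a = 1 then S
           else if a \<ge> 2 \<and> b = a - 1 then 1\<^sub>m nG
           else if b = a then 1\<^sub>m nG
           else if b = wcol dR a then transpose_mat HG
           else 0\<^sub>m (rsz ! a) (cs ! b)))"
  define B where "B = (\<lambda>a b.
        if b = 0 then JXC
        else if 1 \<le> b \<and> b \<le> dR - 1 then JXC * transpose_mat S
        else 0\<^sub>m ([m] ! a) (cs ! b))"
  have e1: "HZ_MB dR n nG rG rZ HZ HG S = block_mat rsz cs A"
    unfolding HZ_MB_def A_def cs_def rsz_def Let_def ..
  have e2: "JX_MB dR n nG rG m JXC S = block_mat [m] cs B"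
    unfolding JX_MB_def B_def cs_def Let_def ..
  have lcs: "length cs = (2*dR-1)" using dR by (simp add: cs_def length_colsMB)
  have ncs: "\<And>b. b < (2*dR-1) \<Longrightarrow> cs ! b = (if b = 0 then n else if b < dR then nG else rG)"
    using dR by (simp add: cs_def nth_colsMB)
  show ?thesis unfolding e1 e2
  proof (rule eq_matI)
    show "dim_row (block_mat rsz cs A * transpose_mat (block_mat [m] cs B)) = dim_row (0\<^sub>m (rZ + (dR - 1) * nG) m)"
      by (simp add: block_mat_def rsz_def sum_list_replicate)
    show "dim_col (block_mat rsz cs A * transpose_mat (block_mat [m] cs B)) = dim_col (0\<^sub>m (rZ + (dR - 1) * nG) m)"
      by (simp add: block_mat_def)
    fix i j assume i: "i < dim_row (0\<^sub>m (rZ + (dR - 1) * nG) m)" and j: "j < dim_col (0\<^sub>m (rZ + (dR - 1) * nG) m)"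
    obtain a i' where loc: "locate rsz i = (a,i')" by (cases "locate rsz i")
    have isl: "i < sum_list rsz" using i by (simp add: rsz_def sum_list_replicate)
    from locate_bound[OF isl] loc have a: "a < dR" and i': "i' < rsz ! a" using dR by (auto simp: rsz_def)
    have jm: "j < m" using j by simp
    have "(block_mat rsz cs A * transpose_mat (block_mat [m] cs B)) $$ (i,j) =
       (\<Sum>b<(2*dR-1). \<Sum>r<cs!b. A a b $$ (i',r) * B 0 b $$ (j,r))"
      by (subst block_prod_entry[OF isl jm loc]) (simp only: lcs)
    also have "\<dots> = 0"
    proof -
      consider "a = 0" | "a = 1" | "2 \<le> a" "a \<le> dR - 1" using a dR by linarith
      then show ?thesis
      proof cases
        case 1
        have i'': "i' < rZ" using i' 1 by (simp add: rsz_def)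
        have "(\<Sum>b<(2*dR-1). \<Sum>r<cs!b. A a b $$ (i',r) * B 0 b $$ (j,r)) = (\<Sum>r<cs!0. A a 0 $$ (i',r) * B 0 0 $$ (j,r))"
          apply (rule sum1)
          using dR apply simp
          using i' jm 1 by (auto simp: A_def B_def wcol_def ncs intro!: sum.neutral)
        also have "\<dots> = (\<Sum>r<n. HZ $$ (i',r) * JXC $$ (j,r))"
          using 1 ncs[of 0] dR by (simp add: A_def B_def)
        also have "\<dots> = (HZ * transpose_mat JXC) $$ (i',j)" by (rule ent[OF HZ JXC i'' jm])
        finally show ?thesis using F2 i'' jm by simp
      next
        case 2
        have i'': "i' < nG" using i' 2 dR by (simp add: rsz_def)
        have "(\<Sum>b<(2*dR-1). \<Sum>r<cs!b. A a b $$ (i',r) * B 0 b $$ (j,r)) = (\<Sum>r<cs!0. A a 0 $$ (i',r) * B 0 0 $$ (j,r)) + (\<Sum>r<cs!1. A a 1 $$ (i',r) * B 0 1 $$ (j,r))"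
          apply (rule sum2)
          using dR apply simp_all
          using i' jm 2 dR by (auto simp: A_def B_def wcol_def ncs intro!: sum.neutral)
        also have "(\<Sum>r<cs!0. A a 0 $$ (i',r) * B 0 0 $$ (j,r)) = (\<Sum>r<n. S $$ (i',r) * JXC $$ (j,r))"
          using 2 ncs[of 0] dR by (simp add: A_def B_def)
        also have "\<dots> = (JXC * transpose_mat S) $$ (j,i')" by (rule trterm[OF S JXC i'' jm])
        also have "(\<Sum>r<cs!1. A a 1 $$ (i',r) * B 0 1 $$ (j,r)) = (\<Sum>r<nG. (1\<^sub>m nG) $$ (i',r) * (JXC * transpose_mat S) $$ (j,r))"
          using 2 ncs[of 1] dR by (simp add: A_def B_def)
        also have "\<dots> = (JXC * transpose_mat S) $$ (j,i')" by (rule idterm) (use JXC S i'' jm in auto)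
        finally show ?thesis by simp
      next
        case 3
        have i'': "i' < nG" using i' 3 dR by (simp add: rsz_def nth_Cons')
        have "(\<Sum>b<(2*dR-1). \<Sum>r<cs!b. A a b $$ (i',r) * B 0 b $$ (j,r)) = (\<Sum>r<cs!(a-1). A a (a-1) $$ (i',r) * B 0 (a-1) $$ (j,r)) + (\<Sum>r<cs!a. A a a $$ (i',r) * B 0 a $$ (j,r))"
          apply (rule sum2)
          using dR 3 apply simp_all
          using i' jm 3 dR by (auto simp: A_def B_def wcol_def ncs intro!: sum.neutral)
        also have "(\<Sum>r<cs!(a-1). A a (a-1) $$ (i',r) * B 0 (a-1) $$ (j,r)) = (\<Sum>r<nG. (1\<^sub>m nG) $$ (i',r) * (JXC * transpose_mat S) $$ (j,r))"
          using 3 ncs[of "a-1"] dR by (auto simp add: A_def B_def wcol_def)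
        also have "\<dots> = (JXC * transpose_mat S) $$ (j,i')" by (rule idterm) (use JXC S i'' jm in auto)
        also have "(\<Sum>r<cs!a. A a a $$ (i',r) * B 0 a $$ (j,r)) = (\<Sum>r<nG. (1\<^sub>m nG) $$ (i',r) * (JXC * transpose_mat S) $$ (j,r))"
          using 3 ncs[of a] dR by (simp add: A_def B_def wcol_def)
        also have "\<dots> = (JXC * transpose_mat S) $$ (j,i')" by (rule idterm) (use JXC S i'' jm in auto)
        finally show ?thesis by simp
      qed
    qed
    finally show "(block_mat rsz cs A * transpose_mat (block_mat [m] cs B)) $$ (i,j) = 0\<^sub>m (rZ + (dR - 1) * nG) m $$ (i,j)"
      using i j by simp
  qed
qed



lemma row_in_rs: assumes "i < dim_row M" shows "row M i \<in> rs M"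
proof -
  have "transpose_mat M *\<^sub>v unit_vec (dim_row M) i = row M i"
    by (rule eq_vecI) (use assms in \<open>auto simp: scalar_prod_right_unit\<close>)
  then show ?thesis unfolding rs_def by (metis (mono_tags, lifting) mem_Collect_eq unit_vec_carrier)
qed

lemma zero_in_rs: "0\<^sub>v (dim_col M) \<in> rs M"
proof -
  have "transpose_mat M *\<^sub>v 0\<^sub>v (dim_row M) = 0\<^sub>v (dim_col M)"
    by (rule eq_vecI) (auto simp: scalar_prod_def)
  then show ?thesis unfolding rs_def by (metis (mono_tags, lifting) mem_Collect_eq zero_carrier_vec)
qed

lemma rs_carrier: "x \<in> rs M \<Longrightarrow> x \<in> carrier_vec (dim_col M)"
  unfolding rs_def carrier_vec_def by auto

lemma dsum_mid: assumes "is_dsum3 n X U V W" "0\<^sub>v n \<in> U" "0\<^sub>v n \<in> W" "x \<in> V" "x \<in> carrier_vec n"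
  shows "x \<in> X"
proof -
  have "x = 0\<^sub>v n + x + 0\<^sub>v n" using assms(5) by simp
  then have "x \<in> sum_sp (sum_sp U V) W" unfolding sum_sp_def using assms(2,3,4) by blast
  then show ?thesis using assms(1) unfolding is_dsum3_def by simp
qed

lemma ker_row_prod: assumes H: "H \<in> carrier_mat r n" and M: "M \<in> carrier_mat m n"
  and rows: "\<forall>j<m. row M j \<in> ker H"
  shows "H * transpose_mat M = 0\<^sub>m r m"
proof (rule eq_matI)
  fix i j assume i: "i < dim_row (0\<^sub>m r m)" and j: "j < dim_col (0\<^sub>m r m)"
  have "row M j \<in> ker H" using rows j by simp
  then have "H *\<^sub>v row M j = 0\<^sub>v r" using H unfolding ker_def by simp
  then have "(H *\<^sub>v row M j) $ i = 0" using i by simp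
  then show "(H * transpose_mat M) $$ (i,j) = 0\<^sub>m r m $$ (i,j)" using i j H M by simp
qed (use H M in auto)

lemma app_ent: "A \<in> carrier_mat a c \<Longrightarrow> B \<in> carrier_mat b c \<Longrightarrow> j < b \<Longrightarrow> r < c \<Longrightarrow> (A @\<^sub>r B) $$ (a+j, r) = B $$ (j,r)"
  by (simp add: append_rows_def)

lemma low_block: assumes H: "H \<in> carrier_mat h c" and A: "A \<in> carrier_mat a c" and B: "B \<in> carrier_mat b c"
  and i: "i < h" and j: "j < b"
  shows "(H * transpose_mat B) $$ (i,j) = (H * transpose_mat (A @\<^sub>r B)) $$ (i, a+j)"
proof -
  have AB: "A @\<^sub>r B \<in> carrier_mat (a+b) c" using A B by auto
  have "(H * transpose_mat B) $$ (i,j) = (\<Sum>r<c. H$$(i,r) * B$$(j,r))" by (rule ent[OF H B i j, symmetric])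
  also have "\<dots> = (\<Sum>r<c. H$$(i,r) * (A @\<^sub>r B)$$(a+j,r))" using app_ent[OF A B j] by simp
  also have "\<dots> = (H * transpose_mat (A @\<^sub>r B)) $$ (i, a+j)" by (rule ent[OF H AB i]) (use j in simp)
  finally show ?thesis .
qed

lemma low_block2: assumes A: "A \<in> carrier_mat a c" and B: "B \<in> carrier_mat b c"
  and C: "C \<in> carrier_mat a c" and D: "D \<in> carrier_mat b c"
  and i: "i < b" and j: "j < b"
  shows "(B * transpose_mat D) $$ (i,j) = ((A @\<^sub>r B) * transpose_mat (C @\<^sub>r D)) $$ (a+i, a+j)"
proof -
  have AB: "A @\<^sub>r B \<in> carrier_mat (a+b) c" using A B by auto
  have CD: "C @\<^sub>r D \<in> carrier_mat (a+b) c" using C D by auto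
  have "(B * transpose_mat D) $$ (i,j) = (\<Sum>r<c. B$$(i,r) * D$$(j,r))" by (rule ent[OF B D i j, symmetric])
  also have "\<dots> = (\<Sum>r<c. (A @\<^sub>r B)$$(a+i,r) * (C @\<^sub>r D)$$(a+j,r))" using app_ent[OF A B i] app_ent[OF C D j] by simp
  also have "\<dots> = ((A @\<^sub>r B) * transpose_mat (C @\<^sub>r D)) $$ (a+i, a+j)" by (rule ent[OF AB CD]) (use i j in simp_all)
  finally show ?thesis .
qed

theorem proposition2:
  fixes n rX rZ k kg q rG nG dR :: nat
    and HX HZ JX JZ FX FZ JZA JZC Jbar Jinv JXA JXC HG S T \<gamma> :: "bit mat"
  assumes dR: "dR \<ge> 2"
    and HX: "HX \<in> carrier_mat rX n" and HZ: "HZ \<in> carrier_mat rZ n"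
    and JX: "JX \<in> carrier_mat k n" and JZ: "JZ \<in> carrier_mat k n"
    and FX: "FX \<in> carrier_mat kg n" and FZ: "FZ \<in> carrier_mat kg n"
    and kerX: "is_dsum3 n (ker HX) (rs HZ) (rs JZ) (rs FZ)"
    and kerZ: "is_dsum3 n (ker HZ) (rs HX) (rs JX) (rs FX)"
    and JJ: "JX * transpose_mat JZ = 1\<^sub>m k"
    and FF: "FX * transpose_mat FZ = 1\<^sub>m kg"
    and q: "q \<le> k"
    and JZA: "JZA \<in> carrier_mat q n" and JZC: "JZC \<in> carrier_mat (k - q) n"
    and indep: "distinct (rows JZA) \<and> (\<forall>c \<in> carrier_vec q. transpose_mat JZA *\<^sub>v c = 0\<^sub>v n \<longrightarrow> c = 0\<^sub>v q)"
    and basis: "rs (JZA @\<^sub>r JZC) = rs JZ"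
    and Jbar: "Jbar \<in> carrier_mat k k" and Jinv: "Jinv \<in> carrier_mat k k"
    and Jbar_inv: "Jbar * Jinv = 1\<^sub>m k" "Jinv * Jbar = 1\<^sub>m k"
    and JZ': "JZA @\<^sub>r JZC = Jbar * JZ"
    and JXA: "JXA \<in> carrier_mat q n" and JXC: "JXC \<in> carrier_mat (k - q) n"
    and JX': "JXA @\<^sub>r JXC = transpose_mat Jinv * JX"
    and HG: "HG \<in> carrier_mat rG nG" and S: "S \<in> carrier_mat nG n" and T: "T \<in> carrier_mat rX rG"
  shows
   "(compatible HX HG S T \<and> finely_devised n HZ FZ JZA HG S \<and>
      \<gamma> \<in> carrier_mat (k - q) rG \<and> JXC * transpose_mat S = \<gamma> * HG \<longrightarrow>
      HX_MM dR n nG rG rX HX HG T * transpose_mat (JZ_MM dR n nG rG (k - q) JZC)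
        = 0\<^sub>m (rX + (dR - 1) * rG) (k - q) \<and>
      HZ_MM dR n nG rG rZ HZ HG S * transpose_mat (JX_MM dR n nG rG (k - q) JXC S \<gamma>)
        = 0\<^sub>m (rZ + dR * nG) (k - q) \<and>
      JX_MM dR n nG rG (k - q) JXC S \<gamma> * transpose_mat (JZ_MM dR n nG rG (k - q) JZC)
        = 1\<^sub>m (k - q))
  \<and> (compatible HX HG S T \<longrightarrow>
      HX_MB dR n nG rG rX HX HG T * transpose_mat (JZ_MB dR n nG rG k (JZA @\<^sub>r JZC))
        = 0\<^sub>m (rX + (dR - 1) * rG) k \<and>
      HZ_MB dR n nG rG rZ HZ HG S * transpose_mat (JX_MB dR n nG rG k (JXA @\<^sub>r JXC) S)
        = 0\<^sub>m (rZ + (dR - 1) * nG) k \<and>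
      JX_MB dR n nG rG k (JXA @\<^sub>r JXC) S * transpose_mat (JZ_MB dR n nG rG k (JZA @\<^sub>r JZC))
        = 1\<^sub>m k)"
proof -
  have JZ'c: "JZA @\<^sub>r JZC \<in> carrier_mat k n" using JZA JZC q by (metis carrier_append_rows le_add_diff_inverse)
  have JX'c: "JXA @\<^sub>r JXC \<in> carrier_mat k n" using JXA JXC q by (metis carrier_append_rows le_add_diff_inverse)
  have z1: "0\<^sub>v n \<in> rs HZ" using zero_in_rs[of HZ] HZ by simp
  have z2: "0\<^sub>v n \<in> rs FZ" using zero_in_rs[of FZ] FZ by simp
  have z3: "0\<^sub>v n \<in> rs HX" using zero_in_rs[of HX] HX by simp
  have z4: "0\<^sub>v n \<in> rs FX" using zero_in_rs[of FX] FX by simp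
  have F4: "HX * transpose_mat (JZA @\<^sub>r JZC) = 0\<^sub>m rX k"
  proof (rule ker_row_prod[OF HX JZ'c], intro allI impI)
    fix j assume "j < k"
    then have "row (JZA @\<^sub>r JZC) j \<in> rs JZ" using row_in_rs[of j "JZA @\<^sub>r JZC"] JZ'c basis by simp
    moreover have "row (JZA @\<^sub>r JZC) j \<in> carrier_vec n" using row_carrier[of "JZA @\<^sub>r JZC" j] JZ'c by simp
    ultimately show "row (JZA @\<^sub>r JZC) j \<in> ker HX" using dsum_mid[OF kerX z1 z2] by blast
  qed
  have HZJX: "HZ * transpose_mat JX = 0\<^sub>m rZ k"
  proof (rule ker_row_prod[OF HZ JX], intro allI impI)
    fix j assume "j < k"
    then have "row JX j \<in> rs JX" using row_in_rs[of j JX] JX by simp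
    moreover have "row JX j \<in> carrier_vec n" using row_carrier[of JX j] JX by simp
    ultimately show "row JX j \<in> ker HZ" using dsum_mid[OF kerZ z3 z4] by blast
  qed
  have F5: "HZ * transpose_mat (JXA @\<^sub>r JXC) = 0\<^sub>m rZ k"
  proof -
    have "HZ * transpose_mat (JXA @\<^sub>r JXC) = HZ * (transpose_mat JX * Jinv)"
      unfolding JX' using transpose_mult[of "transpose_mat Jinv" k k JX n] Jinv JX by simp
    also have "\<dots> = (HZ * transpose_mat JX) * Jinv" using HZ JX Jinv by (simp add: assoc_mult_mat)
    also have "\<dots> = 0\<^sub>m rZ k" using HZJX Jinv by simp
    finally show ?thesis .
  qed
  have F6: "(JXA @\<^sub>r JXC) * transpose_mat (JZA @\<^sub>r JZC) = 1\<^sub>m k"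
  proof -
    have "(JXA @\<^sub>r JXC) * transpose_mat (JZA @\<^sub>r JZC) = (transpose_mat Jinv * JX) * (transpose_mat JZ * transpose_mat Jbar)"
      unfolding JX' JZ' using transpose_mult[OF Jbar JZ] by simp
    also have "\<dots> = transpose_mat Jinv * ((JX * transpose_mat JZ) * transpose_mat Jbar)"
    proof -
      have "(transpose_mat Jinv * JX) * (transpose_mat JZ * transpose_mat Jbar) = transpose_mat Jinv * (JX * (transpose_mat JZ * transpose_mat Jbar))"
        by (rule assoc_mult_mat[of _ k k _ n _ k]) (use Jinv JX JZ Jbar in auto)
      also have "JX * (transpose_mat JZ * transpose_mat Jbar) = (JX * transpose_mat JZ) * transpose_mat Jbar"
        by (rule assoc_mult_mat[symmetric, of _ k n _ k _ k]) (use JX JZ Jbar in auto)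
      finally show ?thesis .
    qed
    also have "\<dots> = transpose_mat Jinv * transpose_mat Jbar" using JJ Jbar by simp
    also have "\<dots> = transpose_mat (Jbar * Jinv)" using transpose_mult[OF Jbar Jinv] by simp
    also have "\<dots> = 1\<^sub>m k" using Jbar_inv by simp
    finally show ?thesis .
  qed
  have F1: "HX * transpose_mat JZC = 0\<^sub>m rX (k - q)"
  proof (rule eq_matI)
    fix i j assume i: "i < dim_row (0\<^sub>m rX (k - q))" and j: "j < dim_col (0\<^sub>m rX (k - q))"
    have "(HX * transpose_mat JZC) $$ (i,j) = (HX * transpose_mat (JZA @\<^sub>r JZC)) $$ (i, q+j)"
      by (rule low_block[OF HX JZA JZC]) (use i j in simp_all)
    also have "\<dots> = 0" using F4 i j q by simp
    finally show "(HX * transpose_mat JZC) $$ (i,j) = 0\<^sub>m rX (k - q) $$ (i,j)" using i j by simp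
  qed (use HX JZC in auto)
  have F2: "HZ * transpose_mat JXC = 0\<^sub>m rZ (k - q)"
  proof (rule eq_matI)
    fix i j assume i: "i < dim_row (0\<^sub>m rZ (k - q))" and j: "j < dim_col (0\<^sub>m rZ (k - q))"
    have "(HZ * transpose_mat JXC) $$ (i,j) = (HZ * transpose_mat (JXA @\<^sub>r JXC)) $$ (i, q+j)"
      by (rule low_block[OF HZ JXA JXC]) (use i j in simp_all)
    also have "\<dots> = 0" using F5 i j q by simp
    finally show "(HZ * transpose_mat JXC) $$ (i,j) = 0\<^sub>m rZ (k - q) $$ (i,j)" using i j by simp
  qed (use HZ JXC in auto)
  have F3: "JXC * transpose_mat JZC = 1\<^sub>m (k - q)"
  proof (rule eq_matI)
    fix i j assume i: "i < dim_row (1\<^sub>m (k - q))" and j: "j < dim_col (1\<^sub>m (k - q))"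
    have "(JXC * transpose_mat JZC) $$ (i,j) = ((JXA @\<^sub>r JXC) * transpose_mat (JZA @\<^sub>r JZC)) $$ (q+i, q+j)"
      by (rule low_block2[OF JXA JXC JZA JZC]) (use i j in simp_all)
    also have "\<dots> = 1\<^sub>m (k - q) $$ (i,j)" using F6 i j q by simp
    finally show "(JXC * transpose_mat JZC) $$ (i,j) = 1\<^sub>m (k - q) $$ (i,j)" .
  qed (use JXC JZC in auto)
  show ?thesis
  proof (intro conjI impI)
    assume H: "compatible HX HG S T \<and> finely_devised n HZ FZ JZA HG S \<and>
      \<gamma> \<in> carrier_mat (k - q) rG \<and> JXC * transpose_mat S = \<gamma> * HG"
    show "HX_MM dR n nG rG rX HX HG T * transpose_mat (JZ_MM dR n nG rG (k - q) JZC)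
        = 0\<^sub>m (rX + (dR - 1) * rG) (k - q)" by (rule G1[OF dR HX JZC F1])
    show "HZ_MM dR n nG rG rZ HZ HG S * transpose_mat (JX_MM dR n nG rG (k - q) JXC S \<gamma>)
        = 0\<^sub>m (rZ + dR * nG) (k - q)" by (rule G2[OF dR HZ JXC HG S _ F2]) (use H in auto)
    show "JX_MM dR n nG rG (k - q) JXC S \<gamma> * transpose_mat (JZ_MM dR n nG rG (k - q) JZC)
        = 1\<^sub>m (k - q)" by (rule G3[OF dR JXC JZC F3])
  next
    show "HX_MB dR n nG rG rX HX HG T * transpose_mat (JZ_MB dR n nG rG k (JZA @\<^sub>r JZC))
        = 0\<^sub>m (rX + (dR - 1) * rG) k" by (rule G4[OF dR HX JZ'c F4])
    show "HZ_MB dR n nG rG rZ HZ HG S * transpose_mat (JX_MB dR n nG rG k (JXA @\<^sub>r JXC) S)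
        = 0\<^sub>m (rZ + (dR - 1) * nG) k" by (rule G5[OF dR HZ JX'c HG S F5])
    show "JX_MB dR n nG rG k (JXA @\<^sub>r JXC) S * transpose_mat (JZ_MB dR n nG rG k (JZA @\<^sub>r JZC))
        = 1\<^sub>m k" by (rule G6[OF dR JX'c JZ'c F6])
  qed
qed


end
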